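(* Let $n\ge2$, $k\ge2$. Denote by $\partial_k$ the graph distance in $H_{n,k}$ and by $\partial_{k-1}$ the graph distance in $H_{n,k-1}$; let $\mathbf r'=0^{k-1}$ be the root of $H_{n,k-1}$ and $P'$ its set of peripheral vertices. For $\mathbf x',\mathbf y'\in\mathbb{Z}_n^{k-1}$ and $\alpha,\beta\in\mathbb{Z}_n$ write $\alpha\mathbf x'$ for the vertex of $H_{n,k}$ obtained by prepending $\alpha$. Then: (a) for every $\alpha\in\mathbb{Z}_n$, $\partial_k(\alpha\mathbf x',\alpha\mathbf y')=\partial_{k-1}(\mathbf x',\mathbf y')$; (b) for every $\alpha\neq0$, $\partial_k(0\mathbf x',\alpha\mathbf y')=\partial_{k-1}(\mathbf x',\mathbf r')+1+\partial_{k-1}(\mathbf y',P')$; (c) for all $\alpha,\beta\neq0$ with $\alpha\ne\beta$, $$\partial_k(\alpha\mathbf x',\beta\mathbf y')=\min\{\partial_{k-1}(\mathbf x',P')+2+\partial_{k-1}(\mathbf y',P'),\ \partial_{k-1}(\mathbf x',\mathbf r')+1+\partial_{k-1}(\mathbf r',\mathbf y')\}.$$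
   Context: Let $n\ge 2$ and $k\ge 1$ be integers. $H_{n,k}$ is the simple undirected graph with vertex set $V_{n,k}=\mathbb{Z}_n^k$ (so $|V_{n,k}|=n^k$), whose vertices are written as strings $x_1x_2\ldots x_k$ with $x_j\in\mathbb{Z}_n=\{0,1,\ldots,n-1\}$. Two distinct vertices are adjacent if and only if they are related by one of the following rules. For $i=0$ the prefix $x_1\ldots x_i$ is empty, and "$0\ldots0$" denotes a string of zeros completing the word to length $k$. (R1) $x_1\ldots x_{k-1}x_k\sim x_1\ldots x_{k-1}y_k$ whenever $y_k\neq x_k$. (R2) For $0\le i\le k-2$: $x_1\ldots x_i0\ldots0\sim x_1\ldots x_ix_{i+1}\ldots x_k$ whenever $x_j\neq 0$ for all $i+1\le j\le k$. (R3) For $1\le i\le k-1$: $x_1\ldots x_{i-1}x_i0\ldots0\sim x_1\ldots x_{i-1}y_i0\ldots0$ whenever $x_i,y_i\neq0$ and $x_i\ne y_i$. In particular, $H_{n,1}$ is the complete graph $K_n$. The root of $H_{n,k}$ is $\mathbf r=00\ldots0$; a vertex of $H_{n,k}$ is peripheral if all its coordinates are nonzero, and $P$ denotes the set of peripheral vertices. For a vertex $\mathbf x$ and a vertex set $U$, $\partial(\mathbf x,U)=\min_{\mathbf u\in U}\partial(\mathbf x,\mathbf u)$. *)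

theory Defs
  imports Main
begin

text \<open>Vertices of H(n,k): words of length k over {0,...,n-1}, represented as lists;
  position j of the list (0-indexed) is the coordinate x_{j+1}.\<close>

definition verts :: "nat \<Rightarrow> nat \<Rightarrow> nat list set" where
  "verts n k = {xs. length xs = k \<and> set xs \<subseteq> {..<n}}"

definition R1 :: "nat \<Rightarrow> nat list \<Rightarrow> nat list \<Rightarrow> bool" where
  "R1 k x y \<longleftrightarrow> take (k - 1) x = take (k - 1) y \<and> x \<noteq> y"

text \<open>Rule R2 (one direction): x_1..x_i 0..0 ~ x_1..x_i x_{i+1}..x_k with x_{i+1},...,x_k all nonzero,
  for 0 <= i <= k-2.\<close>
definition R2 :: "nat \<Rightarrow> nat list \<Rightarrow> nat list \<Rightarrow> bool" where
  "R2 k x y \<longleftrightarrow> (\<exists>i. i + 2 \<le> k \<and> x = take i y @ replicate (k - i) 0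
                        \<and> (\<forall>j. i \<le> j \<and> j < k \<longrightarrow> y ! j \<noteq> 0))"

definition R3 :: "nat \<Rightarrow> nat list \<Rightarrow> nat list \<Rightarrow> bool" where
  "R3 k x y \<longleftrightarrow> (\<exists>i p a b. 1 \<le> i \<and> i \<le> k - 1 \<and> length p = i - 1 \<and>
                        a \<noteq> 0 \<and> b \<noteq> 0 \<and> a \<noteq> b \<and>
                        x = p @ [a] @ replicate (k - i) 0 \<and> y = p @ [b] @ replicate (k - i) 0)"

definition adj :: "nat \<Rightarrow> nat \<Rightarrow> nat list \<Rightarrow> nat list \<Rightarrow> bool" where
  "adj n k x y \<longleftrightarrow> x \<in> verts n k \<and> y \<in> verts n k \<and> x \<noteq> y \<and>
                  (R1 k x y \<or> R2 k x y \<or> R2 k y x \<or> R3 k x y)"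

text \<open>Graph distance: length of a shortest walk (the graph is connected).\<close>
definition gdist :: "nat \<Rightarrow> nat \<Rightarrow> nat list \<Rightarrow> nat list \<Rightarrow> nat" where
  "gdist n k x y = (LEAST m. (adj n k ^^ m) x y)"

definition root :: "nat \<Rightarrow> nat list" where
  "root k = replicate k 0"

definition periph :: "nat \<Rightarrow> nat \<Rightarrow> nat list set" where
  "periph n k = {x \<in> verts n k. \<forall>j < k. x ! j \<noteq> 0}"

definition setdist :: "nat \<Rightarrow> nat \<Rightarrow> nat list \<Rightarrow> nat list set \<Rightarrow> nat" where
  "setdist n k x U = Min (gdist n k x ` U)"

end

theory Submission
  imports Defs
begin

lemma verts_cons: "(a#x \<in> verts n (Suc K)) \<longleftrightarrow> a < n \<and> x \<in> verts n K"
  by (auto simp: verts_def)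

lemma R1_cons: "K \<ge> 1 \<Longrightarrow> R1 (Suc K) (a#x) (b#y) \<longleftrightarrow> a = b \<and> R1 K x y"
  by (cases K) (auto simp: R1_def)

lemma R2_cons:
  assumes "K \<ge> 1" "length x = K" "length y = K"
  shows "R2 (Suc K) (a#x) (b#y) \<longleftrightarrow>
     (a = 0 \<and> x = replicate K 0 \<and> b \<noteq> 0 \<and> (\<forall>j<K. y!j \<noteq> 0)) \<or> (a = b \<and> R2 K x y)"
proof
  assume "R2 (Suc K) (a#x) (b#y)"
  then obtain i where i: "i + 2 \<le> Suc K" "a#x = take i (b#y) @ replicate (Suc K - i) 0"
     "\<forall>j. i \<le> j \<and> j < Suc K \<longrightarrow> (b#y) ! j \<noteq> 0" unfolding R2_def by blast
  show "(a = 0 \<and> x = replicate K 0 \<and> b \<noteq> 0 \<and> (\<forall>j<K. y!j \<noteq> 0)) \<or> (a = b \<and> R2 K x y)"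
  proof (cases i)
    case 0
    have "\<forall>j<K. y!j \<noteq> 0"
    proof (intro allI impI)
      fix j assume "j < K" then show "y!j \<noteq> 0" using i(3)[rule_format, of "Suc j"] 0 by simp
    qed
    then show ?thesis using i 0 by (auto)
  next
    case (Suc i')
    have "R2 K x y" unfolding R2_def
    proof (intro exI[of _ i'] conjI allI impI)
      show "i' + 2 \<le> K" using i Suc by simp
      show "x = take i' y @ replicate (K - i') 0" using i(2) Suc by simp
      fix j assume "i' \<le> j \<and> j < K" then show "y!j \<noteq> 0"
        using i(3)[rule_format, of "Suc j"] Suc by simp
    qed
    then show ?thesis using i Suc by simp
  qed
next
  assume h: "(a = 0 \<and> x = replicate K 0 \<and> b \<noteq> 0 \<and> (\<forall>j<K. y!j \<noteq> 0)) \<or> (a = b \<and> R2 K x y)"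
  show "R2 (Suc K) (a#x) (b#y)"
  proof (cases "a = 0 \<and> x = replicate K 0 \<and> b \<noteq> 0 \<and> (\<forall>j<K. y!j \<noteq> 0)")
    case True
    show ?thesis unfolding R2_def
    proof (intro exI[of _ 0] conjI allI impI)
      show "0 + 2 \<le> Suc K" using assms by simp
      show "a # x = take 0 (b # y) @ replicate (Suc K - 0) 0" using True by simp
      fix j assume "0 \<le> j \<and> j < Suc K" then show "(b#y)!j \<noteq> 0" using True by (cases j) auto
    qed
  next
    case False
    then have "a = b" "R2 K x y" using h by auto
    then obtain i where i: "i + 2 \<le> K" "x = take i y @ replicate (K - i) 0"
     "\<forall>j. i \<le> j \<and> j < K \<longrightarrow> y ! j \<noteq> 0" unfolding R2_def by blast
    show ?thesis unfolding R2_def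
    proof (intro exI[of _ "Suc i"] conjI allI impI)
      show "Suc i + 2 \<le> Suc K" using i by simp
      show "a # x = take (Suc i) (b # y) @ replicate (Suc K - Suc i) 0" using i \<open>a = b\<close> by simp
      fix j assume "Suc i \<le> j \<and> j < Suc K" then show "(b#y)!j \<noteq> 0" using i by (cases j) auto
    qed
  qed
qed

lemma R3_cons:
  assumes "K \<ge> 1" "length x = K" "length y = K"
  shows "R3 (Suc K) (a#x) (b#y) \<longleftrightarrow>
     (a \<noteq> 0 \<and> b \<noteq> 0 \<and> a \<noteq> b \<and> x = replicate K 0 \<and> y = replicate K 0) \<or> (a = b \<and> R3 K x y)"
proof
  assume "R3 (Suc K) (a#x) (b#y)"
  then obtain i p c d where i: "1 \<le> i" "i \<le> K" "length p = i - 1" "c \<noteq> 0" "d \<noteq> 0" "c \<noteq> d"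
    "a#x = p @ [c] @ replicate (Suc K - i) 0" "b#y = p @ [d] @ replicate (Suc K - i) 0"
    unfolding R3_def by auto
  show "(a \<noteq> 0 \<and> b \<noteq> 0 \<and> a \<noteq> b \<and> x = replicate K 0 \<and> y = replicate K 0) \<or> (a = b \<and> R3 K x y)"
  proof (cases p)
    case Nil
    then have "i = 1" using i by simp
    then show ?thesis using i Nil by simp
  next
    case (Cons q p')
    then obtain i' where ii: "i = Suc (Suc i')" using i by (cases i; cases "i - 1") auto
    have "R3 K x y" unfolding R3_def
      apply (rule exI[of _ "Suc i'"], rule exI[of _ p'], rule exI[of _ c], rule exI[of _ d])
      using i Cons ii by simp
    then show ?thesis using i Cons by simp
  qed
next
  assume h: "(a \<noteq> 0 \<and> b \<noteq> 0 \<and> a \<noteq> b \<and> x = replicate K 0 \<and> y = replicate K 0) \<or> (a = b \<and> R3 K x y)"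
  show "R3 (Suc K) (a#x) (b#y)"
  proof (cases "a \<noteq> 0 \<and> b \<noteq> 0 \<and> a \<noteq> b \<and> x = replicate K 0 \<and> y = replicate K 0")
    case True
    show ?thesis unfolding R3_def
      apply (rule exI[of _ 1], rule exI[of _ "[]"], rule exI[of _ a], rule exI[of _ b])
      using True assms by simp
  next
    case False
    then have "a = b" "R3 K x y" using h by auto
    then obtain i p c d where i: "1 \<le> i" "i \<le> K - 1" "length p = i - 1" "c \<noteq> 0" "d \<noteq> 0" "c \<noteq> d"
      "x = p @ [c] @ replicate (K - i) 0" "y = p @ [d] @ replicate (K - i) 0"
      unfolding R3_def by auto
    show ?thesis unfolding R3_def
      apply (rule exI[of _ "Suc i"], rule exI[of _ "a#p"], rule exI[of _ c], rule exI[of _ d])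
      using i \<open>a = b\<close> by (cases i) auto
  qed
qed

lemma verts_len: "x \<in> verts n K \<Longrightarrow> length x = K" by (simp add: verts_def)

lemma root_verts: "0 < n \<Longrightarrow> root K \<in> verts n K" by (auto simp: verts_def root_def)

lemma periph_verts: "p \<in> periph n K \<Longrightarrow> p \<in> verts n K" by (simp add: periph_def)

lemma periph_cons: "K \<ge> 1 \<Longrightarrow> y \<in> verts n K \<Longrightarrow> (y \<in> periph n K) = (\<forall>j<K. y!j \<noteq> 0)"
  by (simp add: periph_def)

lemma adj_cons:
  assumes "K \<ge> 1"
  shows "adj n (Suc K) (a#x) (b#y) \<longleftrightarrow> a < n \<and> b < n \<and>
     ((a = b \<and> adj n K x y) \<or> (a = 0 \<and> b \<noteq> 0 \<and> x = root K \<and> y \<in> periph n K)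
      \<or> (b = 0 \<and> a \<noteq> 0 \<and> y = root K \<and> x \<in> periph n K)
      \<or> (a \<noteq> 0 \<and> b \<noteq> 0 \<and> a \<noteq> b \<and> x = root K \<and> y = root K))" (is "?lhs \<longleftrightarrow> ?rhs")
proof (cases "a < n \<and> b < n \<and> x \<in> verts n K \<and> y \<in> verts n K")
  case True
  then have l: "length x = K" "length y = K" by (auto simp: verts_def)
  have rv: "root K \<in> verts n K" using True root_verts by auto
  have "adj n (Suc K) (a#x) (b#y) \<longleftrightarrow> a#x \<noteq> b#y \<and> (R1 (Suc K) (a#x) (b#y) \<or> R2 (Suc K) (a#x) (b#y) \<or> R2 (Suc K) (b#y) (a#x) \<or> R3 (Suc K) (a#x) (b#y))"
    unfolding adj_def verts_cons using True by simp
  also have "\<dots> \<longleftrightarrow> a#x \<noteq> b#y \<and> ((a = b \<and> R1 K x y) \<or> ((a = 0 \<and> x = replicate K 0 \<and> b \<noteq> 0 \<and> (\<forall>j<K. y!j \<noteq> 0)) \<or> (a = b \<and> R2 K x y))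
     \<or> ((b = 0 \<and> y = replicate K 0 \<and> a \<noteq> 0 \<and> (\<forall>j<K. x!j \<noteq> 0)) \<or> (b = a \<and> R2 K y x))
     \<or> ((a \<noteq> 0 \<and> b \<noteq> 0 \<and> a \<noteq> b \<and> x = replicate K 0 \<and> y = replicate K 0) \<or> (a = b \<and> R3 K x y)))"
    by (simp only: R1_cons[OF assms] R2_cons[OF assms l] R2_cons[OF assms l(2) l(1)] R3_cons[OF assms l])
  also have "\<dots> \<longleftrightarrow> ?rhs"
    using True rv unfolding adj_def periph_def root_def by auto
  finally show ?thesis .
next
  case False
  have rv: "0 < n \<Longrightarrow> root K \<in> verts n K" using root_verts by auto
  show ?thesis using False rv unfolding adj_def verts_cons periph_def by auto
qed

lemma adj_sym: "adj n k x y \<Longrightarrow> adj n k y x"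
  unfolding adj_def R1_def R3_def by (simp, metis)

lemma adj_verts: "adj n k x y \<Longrightarrow> x \<in> verts n k \<and> y \<in> verts n k"
  unfolding adj_def by simp

lemma gd_le: "(adj n k ^^ m) x y \<Longrightarrow> gdist n k x y \<le> m"
  unfolding gdist_def by (rule Least_le)

lemma gd_walk: "(adj n k ^^ m) x y \<Longrightarrow> (adj n k ^^ gdist n k x y) x y"
  unfolding gdist_def by (rule LeastI)

lemma walk_pot:
  assumes "\<forall>u v. adj n k u v \<longrightarrow> F v \<le> F u + (1::nat)"
  shows "(adj n k ^^ m) x y \<Longrightarrow> F y \<le> F x + m"
proof (induction m arbitrary: y)
  case 0 then show ?case by simp
next
  case (Suc m)
  from Suc.prems obtain z where "(adj n k ^^ m) x z" "adj n k z y" by (rule relpowp_Suc_E)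
  then show ?case using Suc.IH assms by fastforce
qed

lemma gd_pot:
  assumes "\<forall>u v. adj n k u v \<longrightarrow> F v \<le> F u + (1::nat)" "(adj n k ^^ m) x y"
  shows "F y \<le> F x + gdist n k x y"
  using walk_pot[OF assms(1) gd_walk[OF assms(2)]] .

lemma walk_sym: "(adj n k ^^ m) x y \<Longrightarrow> (adj n k ^^ m) y x"
proof (induction m arbitrary: y)
  case 0 then show ?case by simp
next
  case (Suc m)
  from Suc.prems obtain z where "(adj n k ^^ m) x z" "adj n k z y" by (rule relpowp_Suc_E)
  then show ?case using Suc.IH adj_sym relpowp_Suc_I2 by metis
qed

lemma lift:
  assumes "K \<ge> 1" "a < n"
  shows "(adj n K ^^ m) x y \<Longrightarrow> (adj n (Suc K) ^^ m) (a#x) (a#y)"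
proof (induction m arbitrary: y)
  case 0 then show ?case by simp
next
  case (Suc m)
  from Suc.prems obtain z where "(adj n K ^^ m) x z" "adj n K z y" by (rule relpowp_Suc_E)
  then show ?case using Suc.IH adj_cons[OF assms(1)] assms(2) relpowp_Suc_I by metis
qed

definition ones :: "nat \<Rightarrow> nat list" where "ones K = replicate K 1"

lemma ones_periph: "2 \<le> n \<Longrightarrow> ones K \<in> periph n K"
  by (auto simp: ones_def periph_def verts_def)

lemma root_adj_periph:
  assumes "K \<ge> 1" "p \<in> periph n K"
  shows "adj n K (root K) p"
proof -
  have pv: "p \<in> verts n K" and nz: "\<forall>j<K. p!j \<noteq> 0" using assms by (auto simp: periph_def)
  have lp: "length p = K" using pv by (simp add: verts_def)
  have "p!0 \<in> set p" using lp assms(1) by simp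
  then have "p!0 < n" using pv by (auto simp: verts_def)
  then have rv: "root K \<in> verts n K" using root_verts by auto
  have ne: "root K \<noteq> p" using nz assms(1) by (auto simp: root_def)
  show ?thesis
  proof (cases "K = 1")
    case True
    then show ?thesis using rv pv ne unfolding adj_def R1_def by simp
  next
    case False
    have "R2 K (root K) p" unfolding R2_def
      by (rule exI[of _ 0]) (use False assms(1) nz in \<open>auto simp: root_def\<close>)
    then show ?thesis using rv pv ne unfolding adj_def by simp
  qed
qed

lemma conn_root:
  assumes "2 \<le> n"
  shows "K \<ge> 1 \<Longrightarrow> x \<in> verts n K \<Longrightarrow> \<exists>m. (adj n K ^^ m) x (root K)"
proof (induction K arbitrary: x)
  case 0 then show ?case by simp
next
  case (Suc K)
  then obtain a x' where x: "x = a # x'" "a < n" "x' \<in> verts n K"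
    by (cases x) (auto simp: verts_def)
  show ?case
  proof (cases "K = 0")
    case True
    then have "x' = []" using x by (simp add: verts_def)
    show ?thesis
    proof (cases "a = 0")
      case True then show ?thesis using \<open>x' = []\<close> x \<open>K = 0\<close>
        by (intro exI[of _ 0]) (simp add: root_def)
    next
      case False
      have "adj n (Suc K) x (root (Suc K))"
        using x \<open>x' = []\<close> \<open>K = 0\<close> False assms
        unfolding adj_def R1_def by (auto simp: root_def verts_def)
      then show ?thesis by (metis relpowp_1)
    qed
  next
    case False
    then have K1: "K \<ge> 1" by simp
    obtain m where m: "(adj n K ^^ m) x' (root K)" using Suc.IH[OF K1 x(3)] by blast
    have w: "(adj n (Suc K) ^^ m) x (a # root K)" using lift[OF K1 x(2) m] x by simp
    show ?thesis
    proof (cases "a = 0")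
      case True then show ?thesis using w by (auto simp: root_def)
    next
      case False
      have "adj n K (root K) (ones K)" by (rule root_adj_periph[OF K1 ones_periph[OF assms]])
      then have e1: "adj n (Suc K) (a # root K) (a # ones K)" using adj_cons[OF K1] x by simp
      have e2: "adj n (Suc K) (a # ones K) (0 # root K)"
        using adj_cons[OF K1] x False assms ones_periph[OF assms] by simp
      have "(adj n (Suc K) ^^ Suc (Suc m)) x (0 # root K)"
        using relpowp_Suc_I[OF relpowp_Suc_I[OF w e1] e2] .
      then show ?thesis by (metis root_def replicate_Suc)
    qed
  qed
qed

lemma conn:
  assumes "2 \<le> n" "K \<ge> 1" "x \<in> verts n K" "y \<in> verts n K"
  shows "\<exists>m. (adj n K ^^ m) x y"
proof -
  obtain m1 where "(adj n K ^^ m1) x (root K)" using conn_root assms by blast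
  moreover obtain m2 where "(adj n K ^^ m2) y (root K)" using conn_root assms by blast
  ultimately show ?thesis using walk_sym relpowp_trans by metis
qed

lemma gd_self: "gdist n k x x = 0"
  using gd_le[where m=0 and x=x and y=x and n=n and k=k] by simp

lemma gd_adj: "adj n k x y \<Longrightarrow> gdist n k x y \<le> 1"
  using gd_le[where m=1 and x=x and y=y and n=n and k=k] by (simp only: relpowp_1)

lemma gd_tri:
  assumes "2 \<le> n" "K \<ge> 1" "x \<in> verts n K" "y \<in> verts n K" "z \<in> verts n K"
  shows "gdist n K x z \<le> gdist n K x y + gdist n K y z"
proof -
  obtain m1 where "(adj n K ^^ m1) x y" using conn assms by blast
  then have w1: "(adj n K ^^ gdist n K x y) x y" by (rule gd_walk)
  obtain m2 where "(adj n K ^^ m2) y z" using conn assms by blast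
  then have w2: "(adj n K ^^ gdist n K y z) y z" by (rule gd_walk)
  show ?thesis using gd_le[OF relpowp_trans[OF w1 w2]] .
qed

lemma gd_sym:
  assumes "2 \<le> n" "K \<ge> 1" "x \<in> verts n K" "y \<in> verts n K"
  shows "gdist n K x y = gdist n K y x"
proof -
  obtain m1 where "(adj n K ^^ m1) x y" using conn assms by blast
  then have w1: "(adj n K ^^ gdist n K x y) x y" by (rule gd_walk)
  obtain m2 where "(adj n K ^^ m2) y x" using conn assms by blast
  then have w2: "(adj n K ^^ gdist n K y x) y x" by (rule gd_walk)
  show ?thesis using gd_le[OF walk_sym[OF w1]] gd_le[OF walk_sym[OF w2]] by simp
qed

lemma gd_lip:
  assumes "2 \<le> n" "K \<ge> 1" "x \<in> verts n K" "adj n K v w"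
  shows "gdist n K x w \<le> gdist n K x v + 1"
  using gd_tri[OF assms(1,2,3), of v w] adj_verts[OF assms(4)] gd_adj[OF assms(4)] by simp

lemma gd_lip2:
  assumes "2 \<le> n" "K \<ge> 1" "x \<in> verts n K" "adj n K v w"
  shows "gdist n K w x \<le> gdist n K v x + 1"
  using gd_tri[OF assms(1,2), of w v x] assms(3) adj_verts[OF assms(4)] gd_adj[OF adj_sym[OF assms(4)]] by simp

lemma verts_finite: "finite (verts n K)"
proof -
  have "verts n K = {xs. set xs \<subseteq> {..<n} \<and> length xs = K}" by (auto simp: verts_def)
  then show ?thesis using finite_lists_length_eq[of "{..<n}" K] by simp
qed

lemma periph_finite: "finite (periph n K)"
  using verts_finite by (rule rev_finite_subset) (auto simp: periph_def)

lemma sd_le: "q \<in> periph n K \<Longrightarrow> setdist n K z (periph n K) \<le> gdist n K z q"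
  unfolding setdist_def using periph_finite by simp

lemma sd_attain: "2 \<le> n \<Longrightarrow> \<exists>q\<in>periph n K. setdist n K z (periph n K) = gdist n K z q"
proof -
  assume "2 \<le> n"
  then have "periph n K \<noteq> {}" using ones_periph by blast
  then have "Min (gdist n K z ` periph n K) \<in> gdist n K z ` periph n K"
    using periph_finite by (intro Min_in) auto
  then show ?thesis unfolding setdist_def by auto
qed

lemma sd_periph: "q \<in> periph n K \<Longrightarrow> setdist n K q (periph n K) = 0"
  using sd_le[of q n K q] gd_self by simp

lemma sd_lip:
  assumes "2 \<le> n" "K \<ge> 1" "adj n K v w"
  shows "setdist n K w (periph n K) \<le> setdist n K v (periph n K) + 1"
proof -
  obtain q where q: "q \<in> periph n K" "setdist n K v (periph n K) = gdist n K v q"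
    using sd_attain[OF assms(1)] by blast
  have "gdist n K w q \<le> gdist n K v q + 1"
    using gd_lip2[OF assms(1,2) periph_verts[OF q(1)] assms(3)] .
  then show ?thesis using sd_le[OF q(1), of w] q(2) by simp
qed

lemma gd_root_periph:
  assumes "K \<ge> 1" "p \<in> periph n K"
  shows "gdist n K (root K) p \<le> 1" "gdist n K p (root K) \<le> 1"
  using gd_adj root_adj_periph[OF assms] adj_sym by blast+

lemma pot_cons:
  assumes K1: "K \<ge> 1"
    and h1: "\<And>a x1 y1. a < n \<Longrightarrow> adj n K x1 y1 \<Longrightarrow> G a y1 \<le> G a x1 + (1::nat)"
    and h2: "\<And>b p. b < n \<Longrightarrow> b \<noteq> 0 \<Longrightarrow> p \<in> periph n K \<Longrightarrow>
               G b p \<le> G 0 (root K) + 1 \<and> G 0 (root K) \<le> G b p + 1"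
    and h3: "\<And>a b. a < n \<Longrightarrow> b < n \<Longrightarrow> a \<noteq> 0 \<Longrightarrow> b \<noteq> 0 \<Longrightarrow> a \<noteq> b \<Longrightarrow>
               G b (root K) \<le> G a (root K) + 1"
  shows "\<forall>u v. adj n (Suc K) u v \<longrightarrow> G (hd v) (tl v) \<le> G (hd u) (tl u) + 1"
proof (intro allI impI)
  fix u v assume uv: "adj n (Suc K) u v"
  then have "u \<in> verts n (Suc K)" "v \<in> verts n (Suc K)" by (auto dest: adj_verts)
  then obtain a x1 b y1 where u: "u = a # x1" and v: "v = b # y1"
    by (cases u; cases v) (auto simp: verts_def)
  have e: "a < n \<and> b < n \<and>
     ((a = b \<and> adj n K x1 y1) \<or> (a = 0 \<and> b \<noteq> 0 \<and> x1 = root K \<and> y1 \<in> periph n K)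
      \<or> (b = 0 \<and> a \<noteq> 0 \<and> y1 = root K \<and> x1 \<in> periph n K)
      \<or> (a \<noteq> 0 \<and> b \<noteq> 0 \<and> a \<noteq> b \<and> x1 = root K \<and> y1 = root K))"
    using uv adj_cons[OF K1] u v by simp
  then show "G (hd v) (tl v) \<le> G (hd u) (tl u) + 1"
    using h1 h2 h3 u v by auto
qed

lemma part_a:
  assumes n2: "2 \<le> n" and K1: "K \<ge> 1" and al: "\<alpha> < n" and x: "x \<in> verts n K" and y: "y \<in> verts n K"
  shows "gdist n (Suc K) (\<alpha> # x) (\<alpha> # y) = gdist n K x y"
proof (rule antisym)
  obtain m where "(adj n K ^^ m) x y" using conn[OF n2 K1 x y] by blast
  then have "(adj n K ^^ gdist n K x y) x y" by (rule gd_walk)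
  then show "gdist n (Suc K) (\<alpha> # x) (\<alpha> # y) \<le> gdist n K x y"
    using gd_le lift[OF K1 al] by blast
next
  have xa: "\<alpha> # x \<in> verts n (Suc K)" "\<alpha> # y \<in> verts n (Suc K)" using x y al by (auto simp: verts_cons)
  obtain m where w: "(adj n (Suc K) ^^ m) (\<alpha> # x) (\<alpha> # y)" using conn[OF n2 _ xa] by auto
  have rv: "root K \<in> verts n K" using root_verts n2 by auto
  define c where "c = gdist n K x (root K)"
  define e where "e = setdist n K x (periph n K)"
  have F1: "\<And>p. p \<in> periph n K \<Longrightarrow> gdist n K x p \<le> c + 1"
    unfolding c_def using gd_tri[OF n2 K1 x rv periph_verts] gd_root_periph[OF K1] by fastforce
  have F2: "\<And>p. p \<in> periph n K \<Longrightarrow> e \<le> gdist n K x p" unfolding e_def by (rule sd_le)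
  obtain q where q: "q \<in> periph n K" "e = gdist n K x q" using sd_attain[OF n2] e_def by blast
  have F4: "c \<le> e + 1" unfolding c_def q(2)
    using gd_tri[OF n2 K1 x periph_verts[OF q(1)] rv] gd_root_periph[OF K1 q(1)] by simp
  have F3: "\<And>p. p \<in> periph n K \<Longrightarrow> gdist n K x p \<le> e + 2"
    using F1 F4 by fastforce
  show "gdist n K x y \<le> gdist n (Suc K) (\<alpha> # x) (\<alpha> # y)"
  proof (cases "\<alpha> = 0")
    case True
    define G :: "nat \<Rightarrow> nat list \<Rightarrow> nat" where "G b z = (if b = 0 then gdist n K x z else c + 1)" for b z
    have P: "\<forall>u v. adj n (Suc K) u v \<longrightarrow> G (hd v) (tl v) \<le> G (hd u) (tl u) + 1"
    proof (rule pot_cons[OF K1])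
      fix a :: nat and x1 y1 assume "a < n" "adj n K x1 y1"
      then show "G a y1 \<le> G a x1 + 1" unfolding G_def using gd_lip[OF n2 K1 x] by simp
    next
      fix b :: nat and p assume "b < n" "b \<noteq> 0" "p \<in> periph n K"
      then show "G b p \<le> G 0 (root K) + 1 \<and> G 0 (root K) \<le> G b p + 1"
        unfolding G_def c_def by simp
    next
      fix a b :: nat assume "a \<noteq> 0" "b \<noteq> 0"
      then show "G b (root K) \<le> G a (root K) + 1" unfolding G_def by simp
    qed
    from gd_pot[OF P w] show ?thesis using True by (simp add: G_def gd_self)
  next
    case False
    define G :: "nat \<Rightarrow> nat list \<Rightarrow> nat" where "G b z = (if b = \<alpha> then gdist n K x z else min c e + 1)" for b z
    have P: "\<forall>u v. adj n (Suc K) u v \<longrightarrow> G (hd v) (tl v) \<le> G (hd u) (tl u) + 1"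
    proof (rule pot_cons[OF K1])
      fix a :: nat and x1 y1 assume "a < n" "adj n K x1 y1"
      then show "G a y1 \<le> G a x1 + 1" unfolding G_def using gd_lip[OF n2 K1 x] by simp
    next
      fix b :: nat and p assume "b < n" "b \<noteq> 0" "p \<in> periph n K"
      then show "G b p \<le> G 0 (root K) + 1 \<and> G 0 (root K) \<le> G b p + 1"
        unfolding G_def using False F1[of p] F2[of p] F3[of p] by auto
    next
      fix a b :: nat assume "a \<noteq> 0" "b \<noteq> 0"
      then show "G b (root K) \<le> G a (root K) + 1" unfolding G_def using F4 c_def by auto
    qed
    from gd_pot[OF P w] show ?thesis by (simp add: G_def gd_self)
  qed
qed

lemma xfacts:
  assumes n2: "2 \<le> n" and K1: "K \<ge> 1" and x: "x \<in> verts n K"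
  shows "\<And>p. p \<in> periph n K \<Longrightarrow> gdist n K x p \<le> gdist n K x (root K) + 1"
    "\<And>p. p \<in> periph n K \<Longrightarrow> setdist n K x (periph n K) \<le> gdist n K x p"
    "\<And>p. p \<in> periph n K \<Longrightarrow> gdist n K x p \<le> setdist n K x (periph n K) + 2"
    "gdist n K x (root K) \<le> setdist n K x (periph n K) + 1"
    "setdist n K x (periph n K) \<le> gdist n K x (root K) + 1"
proof -
  have rv: "root K \<in> verts n K" using root_verts n2 by auto
  define c where "c = gdist n K x (root K)"
  define e where "e = setdist n K x (periph n K)"
  have F1: "\<And>p. p \<in> periph n K \<Longrightarrow> gdist n K x p \<le> c + 1"
    unfolding c_def using gd_tri[OF n2 K1 x rv periph_verts] gd_root_periph[OF K1] by fastforce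
  have F2: "\<And>p. p \<in> periph n K \<Longrightarrow> e \<le> gdist n K x p" unfolding e_def by (rule sd_le)
  obtain q where q: "q \<in> periph n K" "e = gdist n K x q" using sd_attain[OF n2] e_def by blast
  have F4: "c \<le> e + 1" unfolding c_def q(2)
    using gd_tri[OF n2 K1 x periph_verts[OF q(1)] rv] gd_root_periph[OF K1 q(1)] by simp
  have F3: "\<And>p. p \<in> periph n K \<Longrightarrow> gdist n K x p \<le> e + 2"
    using F1 F4 by fastforce
  have F5: "e \<le> c + 1" using F2[OF ones_periph[OF n2]] F1[OF ones_periph[OF n2]] by simp
  show "\<And>p. p \<in> periph n K \<Longrightarrow> gdist n K x p \<le> gdist n K x (root K) + 1"
    "\<And>p. p \<in> periph n K \<Longrightarrow> setdist n K x (periph n K) \<le> gdist n K x p"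
    "\<And>p. p \<in> periph n K \<Longrightarrow> gdist n K x p \<le> setdist n K x (periph n K) + 2"
    "gdist n K x (root K) \<le> setdist n K x (periph n K) + 1"
    "setdist n K x (periph n K) \<le> gdist n K x (root K) + 1"
    using F1 F2 F3 F4 F5 unfolding c_def e_def by auto
qed

lemma part_b:
  assumes n2: "2 \<le> n" and K1: "K \<ge> 1" and al: "\<alpha> < n" "\<alpha> \<noteq> 0"
    and x: "x \<in> verts n K" and y: "y \<in> verts n K"
  shows "gdist n (Suc K) (0 # x) (\<alpha> # y) =
    gdist n K x (root K) + 1 + setdist n K y (periph n K)"
proof (rule antisym)
  have rv: "root K \<in> verts n K" using root_verts n2 by auto
  obtain q where q: "q \<in> periph n K" "setdist n K y (periph n K) = gdist n K y q"
    using sd_attain[OF n2] by blast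
  have qv: "q \<in> verts n K" using periph_verts q(1) .
  have sq: "gdist n K y q = gdist n K q y" using gd_sym[OF n2 K1 y qv] .
  obtain m1 where "(adj n K ^^ m1) x (root K)" using conn[OF n2 K1 x rv] by blast
  then have w1: "(adj n (Suc K) ^^ gdist n K x (root K)) (0 # x) (0 # root K)"
    using gd_walk lift[OF K1, of 0 n] n2 by simp
  obtain m2 where "(adj n K ^^ m2) q y" using conn[OF n2 K1 qv y] by blast
  then have w2: "(adj n (Suc K) ^^ gdist n K q y) (\<alpha> # q) (\<alpha> # y)"
    using gd_walk lift[OF K1 al(1)] by blast
  have e: "adj n (Suc K) (0 # root K) (\<alpha> # q)" using adj_cons[OF K1] al q n2 by simp
  have "(adj n (Suc K) ^^ (gdist n K x (root K) + Suc (gdist n K q y))) (0 # x) (\<alpha> # y)"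
    using relpowp_trans[OF w1 relpowp_Suc_I2[OF e w2]] .
  then show "gdist n (Suc K) (0 # x) (\<alpha> # y) \<le> gdist n K x (root K) + 1 + setdist n K y (periph n K)"
    using gd_le q(2) sq by fastforce
next
  have xa: "0 # x \<in> verts n (Suc K)" "\<alpha> # y \<in> verts n (Suc K)" using x y al n2 by (auto simp: verts_cons)
  obtain m where w: "(adj n (Suc K) ^^ m) (0 # x) (\<alpha> # y)" using conn[OF n2 _ xa] by auto
  define c where "c = gdist n K x (root K)"
  define G :: "nat \<Rightarrow> nat list \<Rightarrow> nat" where
    "G b z = (if b = 0 then gdist n K x z else c + 1 + setdist n K z (periph n K))" for b z
  have P: "\<forall>u v. adj n (Suc K) u v \<longrightarrow> G (hd v) (tl v) \<le> G (hd u) (tl u) + 1"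
  proof (rule pot_cons[OF K1])
    fix a :: nat and x1 y1 assume "a < n" "adj n K x1 y1"
    then show "G a y1 \<le> G a x1 + 1" unfolding G_def using gd_lip[OF n2 K1 x] sd_lip[OF n2 K1] by auto
  next
    fix b :: nat and p assume "b < n" "b \<noteq> 0" "p \<in> periph n K"
    then show "G b p \<le> G 0 (root K) + 1 \<and> G 0 (root K) \<le> G b p + 1"
      unfolding G_def c_def by (simp add: sd_periph)
  next
    fix a b :: nat assume "a \<noteq> 0" "b \<noteq> 0"
    then show "G b (root K) \<le> G a (root K) + 1" unfolding G_def by simp
  qed
  from gd_pot[OF P w] al show "gdist n K x (root K) + 1 + setdist n K y (periph n K) \<le> gdist n (Suc K) (0 # x) (\<alpha> # y)"
    by (simp add: G_def gd_self c_def)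
qed

lemma part_c:
  assumes n2: "2 \<le> n" and K1: "K \<ge> 1" and al: "\<alpha> < n" "\<alpha> \<noteq> 0" and be: "\<beta> < n" "\<beta> \<noteq> 0"
    and ab: "\<alpha> \<noteq> \<beta>" and x: "x \<in> verts n K" and y: "y \<in> verts n K"
  shows "gdist n (Suc K) (\<alpha> # x) (\<beta> # y) =
    min (setdist n K x (periph n K) + 2 + setdist n K y (periph n K))
        (gdist n K x (root K) + 1 + gdist n K (root K) y)"
proof (rule antisym)
  have rv: "root K \<in> verts n K" using root_verts n2 by auto
  obtain qy where qy: "qy \<in> periph n K" "setdist n K y (periph n K) = gdist n K y qy"
    using sd_attain[OF n2] by blast
  have qyv: "qy \<in> verts n K" using periph_verts qy(1) .
  have sq: "gdist n K y qy = gdist n K qy y" using gd_sym[OF n2 K1 y qyv] .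
  obtain qx where qx: "qx \<in> periph n K" "setdist n K x (periph n K) = gdist n K x qx"
    using sd_attain[OF n2] by blast
  have qxv: "qx \<in> verts n K" using periph_verts qx(1) .
  obtain m1 where "(adj n K ^^ m1) x qx" using conn[OF n2 K1 x qxv] by blast
  then have w1: "(adj n (Suc K) ^^ gdist n K x qx) (\<alpha> # x) (\<alpha> # qx)"
    using gd_walk lift[OF K1 al(1)] by blast
  obtain m2 where "(adj n K ^^ m2) qy y" using conn[OF n2 K1 qyv y] by blast
  then have w2: "(adj n (Suc K) ^^ gdist n K qy y) (\<beta> # qy) (\<beta> # y)"
    using gd_walk lift[OF K1 be(1)] by blast
  have e1: "adj n (Suc K) (\<alpha> # qx) (0 # root K)" using adj_cons[OF K1] al qx n2 by simp
  have e2: "adj n (Suc K) (0 # root K) (\<beta> # qy)" using adj_cons[OF K1] be qy n2 by simp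
  have "(adj n (Suc K) ^^ (gdist n K x qx + Suc (Suc (gdist n K qy y)))) (\<alpha> # x) (\<beta> # y)"
    using relpowp_trans[OF w1 relpowp_Suc_I2[OF e1 relpowp_Suc_I2[OF e2 w2]]] .
  then have U1: "gdist n (Suc K) (\<alpha> # x) (\<beta> # y) \<le> setdist n K x (periph n K) + 2 + setdist n K y (periph n K)"
    using gd_le qx(2) qy(2) sq by fastforce
  obtain m3 where "(adj n K ^^ m3) x (root K)" using conn[OF n2 K1 x rv] by blast
  then have w3: "(adj n (Suc K) ^^ gdist n K x (root K)) (\<alpha> # x) (\<alpha> # root K)"
    using gd_walk lift[OF K1 al(1)] by blast
  obtain m4 where "(adj n K ^^ m4) (root K) y" using conn[OF n2 K1 rv y] by blast
  then have w4: "(adj n (Suc K) ^^ gdist n K (root K) y) (\<beta> # root K) (\<beta> # y)"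
    using gd_walk lift[OF K1 be(1)] by blast
  have e3: "adj n (Suc K) (\<alpha> # root K) (\<beta> # root K)" using adj_cons[OF K1] al be ab by simp
  have "(adj n (Suc K) ^^ (gdist n K x (root K) + Suc (gdist n K (root K) y))) (\<alpha> # x) (\<beta> # y)"
    using relpowp_trans[OF w3 relpowp_Suc_I2[OF e3 w4]] .
  then have U2: "gdist n (Suc K) (\<alpha> # x) (\<beta> # y) \<le> gdist n K x (root K) + 1 + gdist n K (root K) y"
    using gd_le by fastforce
  show "gdist n (Suc K) (\<alpha> # x) (\<beta> # y) \<le> min (setdist n K x (periph n K) + 2 + setdist n K y (periph n K))
        (gdist n K x (root K) + 1 + gdist n K (root K) y)" using U1 U2 by simp
next
  have rv: "root K \<in> verts n K" using root_verts n2 by auto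
  have xa: "\<alpha> # x \<in> verts n (Suc K)" "\<beta> # y \<in> verts n (Suc K)" using x y al be by (auto simp: verts_cons)
  obtain m where w: "(adj n (Suc K) ^^ m) (\<alpha> # x) (\<beta> # y)" using conn[OF n2 _ xa] by auto
  define c where "c = gdist n K x (root K)"
  define e where "e = setdist n K x (periph n K)"
  note XF = xfacts[OF n2 K1 x, folded c_def e_def]
  define G :: "nat \<Rightarrow> nat list \<Rightarrow> nat" where
    "G b z = (if b = \<alpha> then gdist n K x z else if b = 0 then e + 1 + gdist n K (root K) z
              else min (e + 2 + setdist n K z (periph n K)) (c + 1 + gdist n K (root K) z))" for b z
  have P: "\<forall>u v. adj n (Suc K) u v \<longrightarrow> G (hd v) (tl v) \<le> G (hd u) (tl u) + 1"
  proof (rule pot_cons[OF K1])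
    fix a :: nat and x1 y1 assume "a < n" "adj n K x1 y1"
    then show "G a y1 \<le> G a x1 + 1" unfolding G_def
      using gd_lip[OF n2 K1 x] gd_lip[OF n2 K1 rv] sd_lip[OF n2 K1] by fastforce
  next
    fix b :: nat and p assume "b < n" "b \<noteq> 0" "p \<in> periph n K"
    then show "G b p \<le> G 0 (root K) + 1 \<and> G 0 (root K) \<le> G b p + 1"
      unfolding G_def using al XF(2,3)[of p] XF(5) by (auto simp: sd_periph gd_self)
  next
    fix a b :: nat assume "a \<noteq> 0" "b \<noteq> 0" "a \<noteq> b"
    then show "G b (root K) \<le> G a (root K) + 1" unfolding G_def using XF(4) al
      by (auto simp: gd_self c_def)
  qed
  from gd_pot[OF P w] al be ab show "min (setdist n K x (periph n K) + 2 + setdist n K y (periph n K))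
        (gdist n K x (root K) + 1 + gdist n K (root K) y) \<le> gdist n (Suc K) (\<alpha> # x) (\<beta> # y)"
    by (simp add: G_def gd_self c_def e_def)
qed


theorem mainTheorem5:
  fixes n k :: nat
  assumes "n \<ge> 2" and "k \<ge> 2"
  shows "(\<forall>\<alpha><n. \<forall>x'\<in>verts n (k-1). \<forall>y'\<in>verts n (k-1).
            gdist n k (\<alpha> # x') (\<alpha> # y') = gdist n (k-1) x' y')
       \<and> (\<forall>\<alpha><n. \<forall>x'\<in>verts n (k-1). \<forall>y'\<in>verts n (k-1). \<alpha> \<noteq> 0 \<longrightarrow>
            gdist n k (0 # x') (\<alpha> # y') =
              gdist n (k-1) x' (root (k-1)) + 1 + setdist n (k-1) y' (periph n (k-1)))
       \<and> (\<forall>\<alpha><n. \<forall>\<beta><n. \<forall>x'\<in>verts n (k-1). \<forall>y'\<in>verts n (k-1).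
            \<alpha> \<noteq> 0 \<longrightarrow> \<beta> \<noteq> 0 \<longrightarrow> \<alpha> \<noteq> \<beta> \<longrightarrow>
            gdist n k (\<alpha> # x') (\<beta> # y') =
              min (setdist n (k-1) x' (periph n (k-1)) + 2 + setdist n (k-1) y' (periph n (k-1)))
                  (gdist n (k-1) x' (root (k-1)) + 1 + gdist n (k-1) (root (k-1)) y'))"
proof -
  obtain K where K: "k = Suc K" "K \<ge> 1" using assms(2) by (cases k) auto
  show ?thesis unfolding K(1) using part_a[OF assms(1) K(2)] part_b[OF assms(1) K(2)] part_c[OF assms(1) K(2)]
    by simp
qed

end
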